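(* Let $\mathbf{p}=(p_1,\dots,p_k)$ be a probability distribution on $[k]$, let $X_1,\dots,X_M$ be i.i.d. with distribution $\mathbf{p}$, and let $\hat p_i=\frac1M\sum_{j=1}^M\mathbf{1}\{X_j=i\}$ and $\hat{\mathbf{p}}=(\hat p_1,\dots,\hat p_k)$. With $L(\mathbf{q})=\sum_{i=1}^k q_i(1-q_i)$, for every $\epsilon\in(0,2)$, $$\mathbb{P}\left[|L(\hat{\mathbf{p}})-L(\mathbf{p})|\ge \frac1M+\sqrt{\frac{2}{M}\log\frac{2}{\epsilon}}\right]\le\epsilon.$$ In particular, with probability at least $1-\frac1M$, $|L(\hat{\mathbf{p}})-L(\mathbf{p})|\le \frac1M+\sqrt{\frac{2\log(2M)}{M}}$.
   Context: $M\ge 1$ is an integer; $\log$ is the natural logarithm. *)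

theory Defs
  imports "HOL-Probability.Probability"
begin

definition L_fun :: "nat \<Rightarrow> (nat \<Rightarrow> real) \<Rightarrow> real" where
  "L_fun k q = (\<Sum>i=1..k. q i * (1 - q i))"

definition emp_freq :: "nat \<Rightarrow> (nat \<Rightarrow> nat) \<Rightarrow> nat \<Rightarrow> real" where
  "emp_freq M X i = (1 / real M) * (\<Sum>j=1..M. if X j = i then 1 else 0)"

text \<open>Law of an i.i.d. sample X_1..X_M with distribution p (components outside {1..M} are 0).\<close>
definition iid_sample :: "nat \<Rightarrow> nat pmf \<Rightarrow> (nat \<Rightarrow> nat) pmf" where
  "iid_sample M p = Pi_pmf {1..M} 0 (\<lambda>_. p)"

end

theory Submission
  imports Defs
begin


lemma fin_Pi_pmf:
  assumes "finite A" "\<And>i. i \<in> A \<Longrightarrow> finite (set_pmf (P i))"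
  shows "finite (set_pmf (Pi_pmf A d P))"
  by (rule finite_subset[OF set_Pi_pmf_subset'[OF assms(1)]]) (use assms in auto)

lemma expectation_pair_fin:
  fixes G :: "'a \<times> 'b \<Rightarrow> real"
  assumes "finite (set_pmf R)" "finite (set_pmf Q)"
  shows "measure_pmf.expectation (pair_pmf R Q) G =
         measure_pmf.expectation Q (\<lambda>x. measure_pmf.expectation R (\<lambda>y. G (y, x)))"
proof -
  have "measure_pmf.expectation (pair_pmf R Q) G = (\<Sum>z\<in>set_pmf R \<times> set_pmf Q. G z * pmf (pair_pmf R Q) z)"
    by (rule integral_measure_pmf_real) (use assms in auto)
  also have "\<dots> = (\<Sum>y\<in>set_pmf R. \<Sum>x\<in>set_pmf Q. G (y,x) * (pmf R y * pmf Q x))"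
    by (simp add: sum.cartesian_product' pmf_pair)
  also have "\<dots> = (\<Sum>x\<in>set_pmf Q. (\<Sum>y\<in>set_pmf R. G (y,x) * pmf R y) * pmf Q x)"
    by (subst sum.swap) (simp add: sum_distrib_left sum_distrib_right mult_ac)
  also have "\<dots> = (\<Sum>x\<in>set_pmf Q. measure_pmf.expectation R (\<lambda>y. G (y, x)) * pmf Q x)"
    by (intro sum.cong refl, subst integral_measure_pmf_real[where A="set_pmf R"]) (use assms in auto)
  also have "\<dots> = measure_pmf.expectation Q (\<lambda>x. measure_pmf.expectation R (\<lambda>y. G (y, x)))"
    by (rule integral_measure_pmf_real[symmetric]) (use assms in auto)
  finally show ?thesis .
qed

lemma hoeff_pmf:
  fixes g :: "'a \<Rightarrow> real"
  assumes fin: "finite (set_pmf R)" and l: "l \<ge> 0"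
    and bd: "\<And>y y'. y \<in> set_pmf R \<Longrightarrow> y' \<in> set_pmf R \<Longrightarrow> \<bar>g y - g y'\<bar> \<le> c"
  shows "measure_pmf.expectation R (\<lambda>y. exp (l * (g y - measure_pmf.expectation R g))) \<le> exp (l\<^sup>2 * c\<^sup>2 / 8)"
proof (cases "l = 0")
  case True
  then show ?thesis by simp
next
  case False
  with l have l: "l > 0" by simp
  define a where "a = Min (g ` set_pmf R)"
  have ne: "set_pmf R \<noteq> {}" by (simp add: set_pmf_not_empty)
  have int: "\<And>y. y \<in> set_pmf R \<Longrightarrow> g y \<in> {a..a+c}"
  proof -
    fix y assume y: "y \<in> set_pmf R"
    obtain y0 where y0: "y0 \<in> set_pmf R" "a = g y0"
    proof -
      have "a \<in> g ` set_pmf R" unfolding a_def using fin ne by (intro Min_in) auto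
      then show ?thesis using that by auto
    qed
    have "a \<le> g y" unfolding a_def using fin y by auto
    moreover have "g y \<le> a + c" using bd[OF y y0(1)] y0(2) by linarith
    ultimately show "g y \<in> {a..a+c}" by auto
  qed
  interpret interval_bounded_random_variable "measure_pmf R" g a "a+c"
  proof unfold_locales
    show "AE x in measure_pmf R. g x \<in> {a..a + c}" by (rule AE_pmfI) (rule int)
  qed simp
  have "ennreal (measure_pmf.expectation R (\<lambda>y. exp (l * (g y - measure_pmf.expectation R g))))
       = (\<integral>\<^sup>+y. exp (l * (g y - measure_pmf.expectation R g)) \<partial>measure_pmf R)"
    by (rule nn_integral_eq_integral[symmetric]) (simp_all add: integrable_measure_pmf_finite fin)
  also have "\<dots> \<le> ennreal (exp (l\<^sup>2 * (a + c - a)\<^sup>2 / 8))"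
    by (rule Hoeffdings_lemma_nn_integral[OF l])
  finally show ?thesis by (simp add: ennreal_le_iff)
qed

lemma expectation_Pi_insert:
  fixes F :: "('a \<Rightarrow> 'b) \<Rightarrow> real"
  assumes "finite A" "a \<notin> A" "finite (set_pmf (P a))" "finite (set_pmf (Pi_pmf A d P))"
  shows "measure_pmf.expectation (Pi_pmf (insert a A) d P) F =
    measure_pmf.expectation (Pi_pmf A d P) (\<lambda>x. measure_pmf.expectation (P a) (\<lambda>y. F (x(a:=y))))"
  using assms by (simp add: Pi_pmf_insert expectation_pair_fin case_prod_beta)

lemma integral_abs_le_const_pmf:
  fixes h :: "'a \<Rightarrow> real"
  assumes "finite (set_pmf R)" "\<And>y. \<bar>h y\<bar> \<le> c"
  shows "\<bar>measure_pmf.expectation R h\<bar> \<le> c"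
proof -
  have b: "-c \<le> h y" "h y \<le> c" for y using assms(2)[of y] by linarith+
  have "measure_pmf.expectation R h \<le> measure_pmf.expectation R (\<lambda>_. c)"
    using assms by (intro integral_mono) (auto simp: integrable_measure_pmf_finite b)
  moreover have "measure_pmf.expectation R (\<lambda>_. -c) \<le> measure_pmf.expectation R h"
    using assms by (intro integral_mono) (auto simp: integrable_measure_pmf_finite b)
  ultimately show ?thesis by (simp add: abs_le_iff)
qed

lemma mcd_mgf:
  fixes f :: "('a \<Rightarrow> 'b) \<Rightarrow> real"
  assumes "finite A"
  shows "(\<And>i. i \<in> A \<Longrightarrow> finite (set_pmf (P i))) \<Longrightarrow> l \<ge> 0 \<Longrightarrow>
    (\<And>x i v. i \<in> A \<Longrightarrow> \<bar>f x - f (x(i:=v))\<bar> \<le> c i) \<Longrightarrow>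
    measure_pmf.expectation (Pi_pmf A d P)
      (\<lambda>x. exp (l * (f x - measure_pmf.expectation (Pi_pmf A d P) f))) \<le> exp (l\<^sup>2 * (\<Sum>i\<in>A. (c i)\<^sup>2) / 8)"
  using assms
proof (induction A arbitrary: f rule: finite_induct)
  case empty
  then show ?case by simp
next
  case (insert a A f)
  define Q where "Q = Pi_pmf A d P"
  define R where "R = P a"
  have finR: "finite (set_pmf R)" using insert.prems(1) by (simp add: R_def)
  have finQ: "finite (set_pmf Q)" unfolding Q_def
    by (rule fin_Pi_pmf) (use insert in auto)
  note E = expectation_Pi_insert[OF insert.hyps(1,2) finR[unfolded R_def] finQ[unfolded Q_def], folded Q_def R_def]
  define g where "g x = measure_pmf.expectation R (\<lambda>y. f (x(a:=y)))" for x
  define \<mu> where "\<mu> = measure_pmf.expectation Q g"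
  have mu: "measure_pmf.expectation (Pi_pmf (insert a A) d P) f = \<mu>"
    by (simp add: E \<mu>_def g_def[abs_def])
  have gbd: "\<bar>g x - g (x(i:=v))\<bar> \<le> c i" if i: "i \<in> A" for x i v
  proof -
    have ia: "i \<noteq> a" using i insert.hyps by auto
    have "g x - g (x(i:=v)) = measure_pmf.expectation R (\<lambda>y. f (x(a:=y)) - f ((x(a:=y))(i:=v)))"
      unfolding g_def using ia
      by (subst Bochner_Integration.integral_diff) (auto simp: integrable_measure_pmf_finite finR fun_upd_twist)
    also have "\<bar>\<dots>\<bar> \<le> c i"
      by (rule integral_abs_le_const_pmf[OF finR]) (use insert.prems(3)[of i] i in blast)
    finally show ?thesis .
  qed
  have IH: "measure_pmf.expectation Q (\<lambda>x. exp (l * (g x - \<mu>))) \<le> exp (l\<^sup>2 * (\<Sum>i\<in>A. (c i)\<^sup>2) / 8)"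
    unfolding \<mu>_def Q_def
    by (rule insert.IH) (use insert.prems gbd in blast)+
  have inner: "measure_pmf.expectation R (\<lambda>y. exp (l * (f (x(a:=y)) - g x))) \<le> exp (l\<^sup>2 * (c a)\<^sup>2 / 8)" for x
    unfolding g_def
  proof (rule hoeff_pmf[OF finR insert.prems(2)])
    fix y y'
    show "\<bar>f (x(a := y)) - f (x(a := y'))\<bar> \<le> c a"
      using insert.prems(3)[of a "x(a:=y)" y'] by (metis fun_upd_upd insertI1)
  qed
  have "measure_pmf.expectation (Pi_pmf (insert a A) d P) (\<lambda>x. exp (l * (f x - \<mu>)))
     = measure_pmf.expectation Q (\<lambda>x. measure_pmf.expectation R (\<lambda>y. exp (l * (f (x(a:=y)) - \<mu>))))"
    by (simp add: E)
  also have "\<dots> = measure_pmf.expectation Q (\<lambda>x. exp (l * (g x - \<mu>)) *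
                 measure_pmf.expectation R (\<lambda>y. exp (l * (f (x(a:=y)) - g x))))"
  proof (intro Bochner_Integration.integral_cong refl)
    fix x
    have "(\<lambda>y. exp (l * (f (x(a:=y)) - \<mu>))) = (\<lambda>y. exp (l * (g x - \<mu>)) * exp (l * (f (x(a:=y)) - g x)))"
      by (auto simp: mult_exp_exp algebra_simps)
    then show "measure_pmf.expectation R (\<lambda>y. exp (l * (f (x(a:=y)) - \<mu>))) = exp (l * (g x - \<mu>)) *
                 measure_pmf.expectation R (\<lambda>y. exp (l * (f (x(a:=y)) - g x)))"
      by simp
  qed
  also have "\<dots> \<le> measure_pmf.expectation Q (\<lambda>x. exp (l * (g x - \<mu>)) * exp (l\<^sup>2 * (c a)\<^sup>2 / 8))"
    by (intro integral_mono mult_left_mono inner) (auto simp: integrable_measure_pmf_finite finQ)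
  also have "\<dots> = measure_pmf.expectation Q (\<lambda>x. exp (l * (g x - \<mu>))) * exp (l\<^sup>2 * (c a)\<^sup>2 / 8)"
    by simp
  also have "\<dots> \<le> exp (l\<^sup>2 * (\<Sum>i\<in>A. (c i)\<^sup>2) / 8) * exp (l\<^sup>2 * (c a)\<^sup>2 / 8)"
    by (intro mult_right_mono IH) auto
  also have "\<dots> = exp (l\<^sup>2 * (\<Sum>i\<in>insert a A. (c i)\<^sup>2) / 8)"
    using insert.hyps by (simp add: mult_exp_exp algebra_simps add_divide_distrib)
  finally show ?case by (simp add: mu)
qed


lemma mcd_tail:
  fixes f :: "('a \<Rightarrow> 'b) \<Rightarrow> real"
  assumes "finite A" "\<And>i. i \<in> A \<Longrightarrow> finite (set_pmf (P i))" "t \<ge> 0"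
    "\<And>x i v. i \<in> A \<Longrightarrow> \<bar>f x - f (x(i:=v))\<bar> \<le> c i"
    "(\<Sum>i\<in>A. (c i)\<^sup>2) > 0"
  shows "measure_pmf.prob (Pi_pmf A d P) {x. f x - measure_pmf.expectation (Pi_pmf A d P) f \<ge> t}
           \<le> exp (-2 * t\<^sup>2 / (\<Sum>i\<in>A. (c i)\<^sup>2))"
proof -
  define Q where "Q = Pi_pmf A d P"
  define S where "S = (\<Sum>i\<in>A. (c i)\<^sup>2)"
  define \<mu> where "\<mu> = measure_pmf.expectation Q f"
  define l where "l = 4 * t / S"
  have S: "S > 0" using assms by (simp add: S_def)
  have l: "l \<ge> 0" using S assms(3) by (simp add: l_def)
  have finQ: "finite (set_pmf Q)" unfolding Q_def by (rule fin_Pi_pmf) (use assms in auto)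
  have "measure_pmf.prob Q {x. f x - \<mu> \<ge> t} = measure_pmf.expectation Q (indicator {x. f x - \<mu> \<ge> t})"
    by simp
  also have "\<dots> \<le> measure_pmf.expectation Q (\<lambda>x. exp (- l * t) * exp (l * (f x - \<mu>)))"
  proof (intro integral_mono)
    fix x
    show "indicator {x. f x - \<mu> \<ge> t} x \<le> exp (- l * t) * exp (l * (f x - \<mu>))"
    proof (cases "f x - \<mu> \<ge> t")
      case True
      then have "0 \<le> l * (f x - \<mu>) + (- l * t)" using l
        by (metis add.commute diff_ge_0_iff_ge mult_minus_left mult_nonneg_nonneg right_diff_distrib' uminus_add_conv_diff)
      then have "1 \<le> exp (l * (f x - \<mu>) + (- l * t))" by simp
      then show ?thesis using True by (simp add: mult_exp_exp mult.commute add.commute)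
    qed simp
  qed (auto simp: integrable_measure_pmf_finite finQ)
  also have "\<dots> = exp (- l * t) * measure_pmf.expectation Q (\<lambda>x. exp (l * (f x - \<mu>)))"
    by simp
  also have "\<dots> \<le> exp (- l * t) * exp (l\<^sup>2 * S / 8)"
    unfolding \<mu>_def Q_def S_def
    by (intro mult_left_mono mcd_mgf assms l) auto
  also have "\<dots> = exp (-2 * t\<^sup>2 / S)"
    using S by (simp add: mult_exp_exp l_def power2_eq_square field_simps)
  finally show ?thesis by (simp add: Q_def S_def \<mu>_def)
qed

lemma mcd_abs:
  fixes f :: "('a \<Rightarrow> 'b) \<Rightarrow> real"
  assumes "finite A" "\<And>i. i \<in> A \<Longrightarrow> finite (set_pmf (P i))" "t \<ge> 0"
    "\<And>x i v. i \<in> A \<Longrightarrow> \<bar>f x - f (x(i:=v))\<bar> \<le> c i"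
    "(\<Sum>i\<in>A. (c i)\<^sup>2) > 0"
  shows "measure_pmf.prob (Pi_pmf A d P) {x. \<bar>f x - measure_pmf.expectation (Pi_pmf A d P) f\<bar> \<ge> t}
           \<le> 2 * exp (-2 * t\<^sup>2 / (\<Sum>i\<in>A. (c i)\<^sup>2))"
proof -
  define Q where "Q = Pi_pmf A d P"
  define \<mu> where "\<mu> = measure_pmf.expectation Q f"
  have m: "measure_pmf.expectation Q (\<lambda>x. - f x) = - \<mu>" by (simp add: \<mu>_def)
  have "{x. \<bar>f x - \<mu>\<bar> \<ge> t} = {x. f x - \<mu> \<ge> t} \<union> {x. - f x - (- \<mu>) \<ge> t}" by auto
  hence "measure_pmf.prob Q {x. \<bar>f x - \<mu>\<bar> \<ge> t} \<le>
      measure_pmf.prob Q {x. f x - \<mu> \<ge> t} + measure_pmf.prob Q {x. - f x - (- \<mu>) \<ge> t}"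
    by (simp add: measure_Un_le)
  also have "\<dots> \<le> exp (-2 * t\<^sup>2 / (\<Sum>i\<in>A. (c i)\<^sup>2)) + exp (-2 * t\<^sup>2 / (\<Sum>i\<in>A. (c i)\<^sup>2))"
  proof (intro add_mono)
    show "measure_pmf.prob Q {x. f x - \<mu> \<ge> t} \<le> exp (-2 * t\<^sup>2 / (\<Sum>i\<in>A. (c i)\<^sup>2))"
      unfolding \<mu>_def Q_def by (rule mcd_tail[OF assms])
    have "measure_pmf.prob Q {x. - f x - measure_pmf.expectation Q (\<lambda>x. - f x) \<ge> t} \<le> exp (-2 * t\<^sup>2 / (\<Sum>i\<in>A. (c i)\<^sup>2))"
      unfolding Q_def
    proof (rule mcd_tail[OF assms(1,2,3) _ assms(5)])
      fix x i v assume "i \<in> A"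
      from assms(4)[OF this, of x v] show "\<bar>- f x - - f (x(i := v))\<bar> \<le> c i" by linarith
    qed
    then show "measure_pmf.prob Q {x. - f x - (- \<mu>) \<ge> t} \<le> exp (-2 * t\<^sup>2 / (\<Sum>i\<in>A. (c i)\<^sup>2))"
      by (simp only: m)
  qed
  finally show ?thesis by (simp add: Q_def \<mu>_def)
qed



lemma count_le: "(\<Sum>j=1..M. if X j = (i::nat) then 1 else 0) \<le> real M"
proof -
  have "(\<Sum>j=1..M. if X j = i then 1 else (0::real)) \<le> (\<Sum>j=1..M. 1)"
    by (intro sum_mono) auto
  then show ?thesis by simp
qed

lemma ef_range: "0 \<le> emp_freq M X i" "emp_freq M X i \<le> 1"
proof -
  show "0 \<le> emp_freq M X i" unfolding emp_freq_def by (intro mult_nonneg_nonneg sum_nonneg) auto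
  show "emp_freq M X i \<le> 1"
  proof (cases "M = 0")
    case False
    have "emp_freq M X i \<le> (1 / real M) * real M" unfolding emp_freq_def
      by (intro mult_left_mono count_le) auto
    then show ?thesis using False by simp
  qed (simp add: emp_freq_def)
qed

lemma ef_diff:
  assumes "j \<in> {1..M}"
  shows "emp_freq M X i - emp_freq M (X(j:=v)) i =
    (1 / real M) * ((if X j = i then 1 else 0) - (if v = i then 1 else 0))"
proof -
  have "(\<Sum>j'=1..M. if X j' = i then 1 else (0::real)) - (\<Sum>j'=1..M. if (X(j:=v)) j' = i then 1 else 0)
      = (\<Sum>j'=1..M. (if X j' = i then 1 else 0) - (if (X(j:=v)) j' = i then 1 else 0))"
    by (simp add: sum_subtractf)
  also have "\<dots> = (\<Sum>j'=1..M. if j' = j then (if X j = i then 1 else 0) - (if v = i then 1 else 0) else 0)"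
    by (intro sum.cong) auto
  also have "\<dots> = (if X j = i then 1 else 0) - (if v = i then 1 else 0)"
    using assms by (simp add: sum.delta')
  finally have D: "(\<Sum>j'=1..M. if X j' = i then 1 else (0::real)) - (\<Sum>j'=1..M. if (X(j:=v)) j' = i then 1 else 0) = (if X j = i then 1 else 0) - (if v = i then 1 else 0)" .
  show ?thesis unfolding emp_freq_def right_diff_distrib[symmetric] D ..
qed

lemma phi_lip:
  fixes a b :: real
  assumes "0 \<le> a" "a \<le> 1" "0 \<le> b" "b \<le> 1"
  shows "\<bar>a * (1 - a) - b * (1 - b)\<bar> \<le> \<bar>a - b\<bar>"
proof -
  have "a * (1 - a) - b * (1 - b) = (a - b) * (1 - a - b)" by (simp add: algebra_simps)
  then have "\<bar>a * (1 - a) - b * (1 - b)\<bar> = \<bar>a - b\<bar> * \<bar>1 - a - b\<bar>" by (simp add: abs_mult)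
  also have "\<dots> \<le> \<bar>a - b\<bar> * 1" using assms by (intro mult_left_mono) auto
  finally show ?thesis by simp
qed

lemma ind_sum_le1: "(\<Sum>i=1..k. if (y::nat) = i then 1 else (0::real)) \<le> 1"
  by (simp add: sum.delta)

lemma L_bd:
  assumes "j \<in> {1..M}"
  shows "\<bar>L_fun k (emp_freq M X) - L_fun k (emp_freq M (X(j:=v)))\<bar> \<le> 2 / real M"
proof -
  have "\<bar>L_fun k (emp_freq M X) - L_fun k (emp_freq M (X(j:=v)))\<bar> =
     \<bar>\<Sum>i=1..k. emp_freq M X i * (1 - emp_freq M X i) - emp_freq M (X(j:=v)) i * (1 - emp_freq M (X(j:=v)) i)\<bar>"
    unfolding L_fun_def by (simp add: sum_subtractf)
  also have "\<dots> \<le> (\<Sum>i=1..k. \<bar>emp_freq M X i * (1 - emp_freq M X i) - emp_freq M (X(j:=v)) i * (1 - emp_freq M (X(j:=v)) i)\<bar>)"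
    by (rule sum_abs)
  also have "\<dots> \<le> (\<Sum>i=1..k. \<bar>emp_freq M X i - emp_freq M (X(j:=v)) i\<bar>)"
    by (intro sum_mono phi_lip ef_range)
  also have "\<dots> = (\<Sum>i=1..k. (1 / real M) * \<bar>(if X j = i then 1 else 0) - (if v = i then 1 else 0)\<bar>)"
    by (intro sum.cong refl) (simp add: ef_diff[OF assms] abs_mult)
  also have "\<dots> \<le> (\<Sum>i=1..k. (1 / real M) * ((if X j = i then 1 else 0) + (if v = i then 1 else 0)))"
    by (intro sum_mono mult_left_mono) auto
  also have "\<dots> = (1 / real M) * ((\<Sum>i=1..k. if X j = i then 1 else 0) + (\<Sum>i=1..k. if v = i then 1 else 0))"
    unfolding sum.distrib[symmetric] sum_distrib_left by (rule refl)
  also have "\<dots> \<le> (1 / real M) * (1 + 1)"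
    by (intro mult_left_mono add_mono ind_sum_le1) auto
  finally show ?thesis by simp
qed



lemma E_ind_p: "measure_pmf.expectation p (\<lambda>v. if v = i then 1 else (0::real)) = pmf p i"
proof -
  have "(\<lambda>v. if v = i then 1 else (0::real)) = indicator {i}" by (auto simp: indicator_def)
  then show ?thesis by (simp add: measure_pmf_single)
qed

lemma E_prod_ind:
  assumes "finite A" "B \<subseteq> A" "finite (set_pmf p)"
  shows "measure_pmf.expectation (Pi_pmf A d (\<lambda>_. p)) (\<lambda>X. \<Prod>x\<in>B. (if X x = i then 1 else (0::real))) = pmf p i ^ card B"
proof -
  define F where "F x v = (if x \<in> B then (if v = i then 1 else 0) else (1::real))" for x v
  have fB: "finite B" using assms finite_subset by blast
  have e: "(\<lambda>X. \<Prod>x\<in>B. (if X x = i then 1 else (0::real))) = (\<lambda>X. \<Prod>x\<in>A. F x (X x))"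
  proof
    fix X
    have "(\<Prod>x\<in>A. F x (X x)) = (\<Prod>x\<in>A \<inter> B. (if X x = i then 1 else (0::real)))"
      unfolding F_def using assms(1) by (subst prod.inter_restrict) auto
    also have "A \<inter> B = B" using assms by auto
    finally show "(\<Prod>x\<in>B. (if X x = i then 1 else (0::real))) = (\<Prod>x\<in>A. F x (X x))" by simp
  qed
  have "measure_pmf.expectation (Pi_pmf A d (\<lambda>_. p)) (\<lambda>X. \<Prod>x\<in>B. (if X x = i then 1 else (0::real)))
       = (\<Prod>x\<in>A. measure_pmf.expectation p (F x))"
    unfolding e by (rule expectation_prod_Pi_pmf) (auto simp: assms integrable_measure_pmf_finite F_def)
  also have "\<dots> = (\<Prod>x\<in>A. if x \<in> B then pmf p i else 1)"
  proof (intro prod.cong refl)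
    fix x
    show "measure_pmf.expectation p (F x) = (if x \<in> B then pmf p i else 1)"
      by (cases "x \<in> B") (simp_all add: F_def[abs_def] E_ind_p)
  qed
  also have "\<dots> = (\<Prod>x\<in>A \<inter> B. pmf p i)"
    using assms(1) by (subst prod.inter_restrict) auto
  also have "A \<inter> B = B" using assms by auto
  finally show ?thesis by simp
qed



lemma e_prod: "(if X j = (i::nat) then 1 else (0::real)) * (if X j' = i then 1 else 0) = (\<Prod>x\<in>{j,j'}. if X x = i then 1 else 0)"
  by (cases "j = j'") auto

lemma sum_if_eq:
  assumes "j \<in> {1..M}"
  shows "(\<Sum>j'=1..M. if j = j' then a else (b::real)) = real M * b + (a - b)"
proof -
  have "(\<Sum>j'=1..M. if j = j' then a else b) = (\<Sum>j'=1..M. b + (if j' = j then a - b else 0))"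
    by (intro sum.cong) auto
  also have "\<dots> = real M * b + (a - b)" using assms by (simp add: sum.distrib sum.delta)
  finally show ?thesis .
qed

lemma E_term:
  assumes M: "M \<ge> 1" and fin: "finite (set_pmf p)"
  shows "measure_pmf.expectation (Pi_pmf {1..M} 0 (\<lambda>_. p)) (\<lambda>X. emp_freq M X i * (1 - emp_freq M X i))
     = (1 - 1 / real M) * (pmf p i * (1 - pmf p i))"
proof -
  define Q where "Q = Pi_pmf {1..M} 0 (\<lambda>_. p)"
  define q where "q = pmf p i"
  define e where "e j X = (if X j = i then 1 else (0::real))" for j and X :: "nat \<Rightarrow> nat"
  have finQ: "finite (set_pmf Q)" unfolding Q_def by (rule fin_Pi_pmf) (use fin in auto)
  note intQ = integrable_measure_pmf_finite[OF finQ]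
  have pt: "emp_freq M X i * (1 - emp_freq M X i) =
     (1 / real M) * (\<Sum>j=1..M. e j X) - (1 / real M)^2 * (\<Sum>j=1..M. \<Sum>j'=1..M. \<Prod>x\<in>{j,j'}. e x X)" for X
  proof -
    have ef: "emp_freq M X i = (1 / real M) * (\<Sum>j=1..M. e j X)" by (simp add: emp_freq_def e_def)
    have "(\<Sum>j=1..M. \<Sum>j'=1..M. \<Prod>x\<in>{j,j'}. e x X) = (\<Sum>j=1..M. e j X) * (\<Sum>j'=1..M. e j' X)"
      by (simp add: sum_product e_def e_prod)
    then show ?thesis unfolding ef by (simp add: algebra_simps power2_eq_square)
  qed
  have E1: "measure_pmf.expectation Q (e j) = q" if "j \<in> {1..M}" for j
    using E_prod_ind[of "{1..M}" "{j}" p 0 i] that fin by (simp add: Q_def q_def e_def[abs_def])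
  have E2: "measure_pmf.expectation Q (\<lambda>X. \<Prod>x\<in>{j,j'}. e x X) = (if j = j' then q else q^2)"
    if "j \<in> {1..M}" "j' \<in> {1..M}" for j j'
    using E_prod_ind[of "{1..M}" "{j,j'}" p 0 i] that fin by (simp add: Q_def q_def e_def card_insert_if power2_eq_square)
  have "measure_pmf.expectation Q (\<lambda>X. emp_freq M X i * (1 - emp_freq M X i))
     = (1 / real M) * (\<Sum>j=1..M. measure_pmf.expectation Q (e j))
       - (1 / real M)^2 * (\<Sum>j=1..M. \<Sum>j'=1..M. measure_pmf.expectation Q (\<lambda>X. \<Prod>x\<in>{j,j'}. e x X))"
    unfolding pt by (simp add: intQ Bochner_Integration.integral_sum)
  also have "\<dots> = (1 / real M) * (\<Sum>j=1..M. q) - (1 / real M)^2 * (\<Sum>j=1..M. \<Sum>j'=1..M. if j = j' then q else q^2)"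
    by (simp add: E1 E2)
  also have "\<dots> = (1 / real M) * (real M * q) - (1 / real M)^2 * (\<Sum>j=1..M. real M * q^2 + (q - q^2))"
  proof -
    have "(\<Sum>j=1..M. \<Sum>j'=1..M. if j = j' then q else q^2) = (\<Sum>j=1..M. real M * q^2 + (q - q^2))"
      by (intro sum.cong refl sum_if_eq)
    then show ?thesis by simp
  qed
  also have "\<dots> = (1 - 1 / real M) * (q * (1 - q))"
    using M by (simp add: field_simps power2_eq_square)
  finally show ?thesis by (simp add: Q_def q_def)
qed



theorem theorem3:
  fixes k M :: nat and p :: "nat pmf"
  assumes "M \<ge> 1"
    and "set_pmf p \<subseteq> {1..k}"
  shows "(\<forall>\<epsilon>::real. 0 < \<epsilon> \<and> \<epsilon> < 2 \<longrightarrow>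
           measure_pmf.prob (iid_sample M p)
             {X. \<bar>L_fun k (emp_freq M X) - L_fun k (pmf p)\<bar>
                   \<ge> 1 / real M + sqrt (2 / real M * ln (2 / \<epsilon>))} \<le> \<epsilon>)
       \<and> measure_pmf.prob (iid_sample M p)
             {X. \<bar>L_fun k (emp_freq M X) - L_fun k (pmf p)\<bar>
                   \<le> 1 / real M + sqrt (2 * ln (2 * real M) / real M)} \<ge> 1 - 1 / real M"
proof -
  note M = assms(1)
  have finp: "finite (set_pmf p)" using assms(2) finite_subset by blast
  define Q where "Q = Pi_pmf {1..M} 0 (\<lambda>_. p)"
  have Qdef: "iid_sample M p = Q" by (simp add: iid_sample_def Q_def)
  define f where "f X = L_fun k (emp_freq M X)" for X
  define \<mu> where "\<mu> = measure_pmf.expectation Q f"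
  define Lp where "Lp = L_fun k (pmf p)"
  have finQ: "finite (set_pmf Q)" unfolding Q_def by (rule fin_Pi_pmf) (use finp in auto)
  have mu: "\<mu> = (1 - 1 / real M) * Lp"
  proof -
    have "\<mu> = (\<Sum>i=1..k. measure_pmf.expectation Q (\<lambda>X. emp_freq M X i * (1 - emp_freq M X i)))"
      unfolding \<mu>_def f_def L_fun_def
      by (simp add: integrable_measure_pmf_finite[OF finQ] Bochner_Integration.integral_sum)
    also have "\<dots> = (\<Sum>i=1..k. (1 - 1 / real M) * (pmf p i * (1 - pmf p i)))"
      unfolding Q_def by (intro sum.cong refl E_term M finp)
    finally show ?thesis by (simp add: Lp_def L_fun_def sum_distrib_left)
  qed
  have Lp0: "0 \<le> Lp" unfolding Lp_def L_fun_def
    by (intro sum_nonneg mult_nonneg_nonneg) (auto simp: pmf_le_1)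
  have "Lp \<le> (\<Sum>i=1..k. pmf p i)" unfolding Lp_def L_fun_def
    by (intro sum_mono) (auto simp: pmf_le_1 mult_left_le)
  also have "\<dots> = 1" by (rule sum_pmf_eq_1) (use assms(2) in auto)
  finally have Lp1: "Lp \<le> 1" .
  have bias: "\<bar>\<mu> - Lp\<bar> \<le> 1 / real M"
  proof -
    have "\<mu> - Lp = - (Lp / real M)" unfolding mu by (simp add: algebra_simps)
    then have "\<bar>\<mu> - Lp\<bar> = Lp / real M" using Lp0 by simp
    also have "\<dots> \<le> 1 / real M" using Lp1 M by (intro divide_right_mono) auto
    finally show ?thesis .
  qed
  have S: "(\<Sum>i\<in>{1..M}. (2 / real M)\<^sup>2) = 4 / real M"
    using M by (simp add: power2_eq_square field_simps)
  have tail: "measure_pmf.prob Q {X. \<bar>f X - \<mu>\<bar> \<ge> t} \<le> 2 * exp (- (real M * t\<^sup>2 / 2))" if t: "t \<ge> 0" for t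
  proof -
    have "measure_pmf.prob Q {X. \<bar>f X - \<mu>\<bar> \<ge> t} \<le> 2 * exp (-2 * t\<^sup>2 / (\<Sum>i\<in>{1..M}. (2 / real M)\<^sup>2))"
      unfolding Q_def \<mu>_def
    proof (rule mcd_abs)
      show "(\<Sum>i\<in>{1..M}. (2 / real M)\<^sup>2) > 0" using M S by simp
      fix x i v assume "i \<in> {1..M}"
      then show "\<bar>f x - f (x(i:=v))\<bar> \<le> 2 / real M" unfolding f_def by (rule L_bd)
    qed (use t finp in auto)
    also have "-2 * t\<^sup>2 / (\<Sum>i\<in>{1..M}. (2 / real M)\<^sup>2) = - (real M * t\<^sup>2 / 2)"
      unfolding S by (simp add: field_simps)
    finally show ?thesis .
  qed
  have part1: "measure_pmf.prob Q {X. \<bar>f X - Lp\<bar> \<ge> 1 / real M + sqrt (2 / real M * ln (2 / \<epsilon>))} \<le> \<epsilon>"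
    if e: "0 < \<epsilon>" "\<epsilon> < 2" for \<epsilon> :: real
  proof -
    define t where "t = sqrt (2 / real M * ln (2 / \<epsilon>))"
    have ln0: "ln (2 / \<epsilon>) > 0" using e by simp
    have t0: "t \<ge> 0" unfolding t_def using ln0 by simp
    have t2: "t\<^sup>2 = 2 / real M * ln (2 / \<epsilon>)" unfolding t_def using ln0 by simp
    have "{X. \<bar>f X - Lp\<bar> \<ge> 1 / real M + t} \<subseteq> {X. \<bar>f X - \<mu>\<bar> \<ge> t}"
      using bias by auto
    then have "measure_pmf.prob Q {X. \<bar>f X - Lp\<bar> \<ge> 1 / real M + t} \<le> measure_pmf.prob Q {X. \<bar>f X - \<mu>\<bar> \<ge> t}"
      by (rule measure_pmf.finite_measure_mono) simp
    also have "\<dots> \<le> 2 * exp (- (real M * t\<^sup>2 / 2))" by (rule tail[OF t0])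
    also have "real M * t\<^sup>2 / 2 = ln (2 / \<epsilon>)" unfolding t2 using M by simp
    also have "2 * exp (- ln (2 / \<epsilon>)) = \<epsilon>" using e by (simp add: exp_minus)
    finally show ?thesis by (simp add: t_def)
  qed
  have part2: "measure_pmf.prob Q {X. \<bar>f X - Lp\<bar> \<le> 1 / real M + sqrt (2 * ln (2 * real M) / real M)} \<ge> 1 - 1 / real M"
  proof -
    define c where "c = 1 / real M + sqrt (2 * ln (2 * real M) / real M)"
    have eq: "2 / real M * ln (2 / (1 / real M)) = 2 * ln (2 * real M) / real M" by simp
    have M1: "real M \<ge> 1" using M by simp
    have e: "0 < 1 / real M" "1 / real M < (2::real)" using M1 by (auto simp: divide_simps)
    have P1: "measure_pmf.prob Q {X. \<bar>f X - Lp\<bar> \<ge> c} \<le> 1 / real M"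
      using part1[OF e] unfolding eq c_def .
    have "1 - 1 / real M \<le> 1 - measure_pmf.prob Q {X. \<bar>f X - Lp\<bar> \<ge> c}" using P1 by simp
    also have "\<dots> = measure_pmf.prob Q (UNIV - {X. \<bar>f X - Lp\<bar> \<ge> c})"
      using measure_pmf.prob_compl[of "{X. \<bar>f X - Lp\<bar> \<ge> c}" Q] by simp
    also have "\<dots> \<le> measure_pmf.prob Q {X. \<bar>f X - Lp\<bar> \<le> c}"
      by (rule measure_pmf.finite_measure_mono) auto
    finally show ?thesis by (simp add: c_def)
  qed
  show ?thesis
    using part1 part2 unfolding Qdef f_def Lp_def by blast
qed


end
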